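(* Let $\mathcal A\in\mathbb C^{n_1\times n_1\times n_3}$ with $\mathrm{ind}(\mathcal A)=k$ and let $\mathcal A^-$ be a fixed element of $\mathcal A\{1\}$. If $\mathcal A^{-,D}$ is idempotent, then: (a) $\mathcal A^k=\mathcal A^{k+1}$, and moreover $\mathcal A^D\mathcal A^k=\mathcal A^k$; (b) $(\mathcal A^{-,D})^k=(\mathcal A^{-,D})^k\mathcal A$, and moreover $(\mathcal A^{-,D})^m=(\mathcal A^{-,D})^m\mathcal A$ for every positive integer $m$; (c) $\mathcal A^{-,D}=(\mathcal A^{-,D})^m\mathcal A^m$ for every positive integer $m$; (d) $\mathcal A^k\mathcal A^{-,D}=\mathcal A^k$.
   Context: Fix a nonsingular matrix $M\in\mathbb C^{n_3\times n_3}$. For $\mathcal C\in\mathbb C^{n_1\times n_2\times n_3}$ let $\widehat{\mathcal C}=\mathcal C\times_3M$, i.e. $\widehat{\mathcal C}_{ijk}=\sum_{l=1}^{n_3}M_{kl}\mathcal C_{ijl}$, and let $\widehat{\mathcal C}^{(i)}$ denote its $i$-th frontal slice. The M-product $\mathcal C\star_M\mathcal D$ of $\mathcal C\in\mathbb C^{n_1\times n_2\times n_3}$ and $\mathcal D\in\mathbb C^{n_2\times l\times n_3}$ is the unique tensor with $\widehat{\mathcal C\star_M\mathcal D}^{(i)}=\widehat{\mathcal C}^{(i)}\widehat{\mathcal D}^{(i)}$ for all $i\in[n_3]$. Juxtaposition of tensors denotes the M-product; powers are M-product powers with $\mathcal A^0=\mathcal I$ where $\widehat{\mathcal I}^{(i)}=I_{n_1}$.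 $\mathcal A\{1\}$ is the set of all $\mathcal W$ with $\mathcal A\mathcal W\mathcal A=\mathcal A$. The index $\mathrm{ind}(\mathcal A)$ is $\max_{i}\mathrm{ind}(\widehat{\mathcal A}^{(i)})$, where the index of a square matrix $B$ is the least $k\ge0$ with $\mathrm{rank}(B^{k+1})=\mathrm{rank}(B^k)$. For $\mathrm{ind}(\mathcal A)=k$, the Drazin inverse $\mathcal A^D$ is the unique $\mathcal W$ with $\mathcal W\mathcal A^{k+1}=\mathcal A^k$, $\mathcal W\mathcal A\mathcal W=\mathcal W$, $\mathcal A\mathcal W=\mathcal W\mathcal A$. The 1-D inverse is $\mathcal A^{-,D}=\mathcal A^-\mathcal A\mathcal A^D$; it is idempotent if $(\mathcal A^{-,D})^2=\mathcal A^{-,D}$. *)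

theory Defs
  imports "HOL-Analysis.Analysis"
begin

text \<open>A third-order tensor in C^(n1 x n2 x n3) is represented as its family of frontal
slices: T $ i is the i-th frontal slice (an n1 x n2 matrix), indices of the third mode
range over the finite type 'k (so n3 = CARD('k)).\<close>

definition mode3 :: "complex^'k^'k \<Rightarrow> complex^'n^'m^'k \<Rightarrow> complex^'n^'m^'k" where
  "mode3 M C = (\<chi> k. \<chi> i j. \<Sum>l\<in>UNIV. M$k$l * C$l$i$j)"

definition that :: "complex^'k^'k \<Rightarrow> complex^'n^'m^'k \<Rightarrow> complex^'n^'m^'k" where
  "that M C = mode3 M C"

text \<open>M-product: the unique tensor whose transformed slices are the products of the
transformed slices (M assumed nonsingular).\<close>
definition mprod :: "complex^'k^'k \<Rightarrow> complex^'p^'m^'k \<Rightarrow> complex^'n^'p^'k \<Rightarrow> complex^'n^'m^'k" where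
  "mprod M C D = (THE T. \<forall>i. (that M T)$i = (that M C)$i ** (that M D)$i)"

definition tid :: "complex^'k^'k \<Rightarrow> complex^'n^'n^'k" where
  "tid M = (THE T. \<forall>i. (that M T)$i = mat 1)"

primrec tpow :: "complex^'k^'k \<Rightarrow> complex^'n^'n^'k \<Rightarrow> nat \<Rightarrow> complex^'n^'n^'k" where
  "tpow M A 0 = tid M"
| "tpow M A (Suc m) = mprod M A (tpow M A m)"

primrec mpow :: "'a::field^'n^'n \<Rightarrow> nat \<Rightarrow> 'a^'n^'n" where
  "mpow B 0 = mat 1"
| "mpow B (Suc m) = B ** mpow B m"

definition mat_index :: "'a::field^'n^'n \<Rightarrow> nat" where
  "mat_index B = (LEAST k. rank (mpow B (Suc k)) = rank (mpow B k))"

definition tind :: "complex^'k^'k \<Rightarrow> complex^'n^'n^'k \<Rightarrow> nat" where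
  "tind M A = Max (range (\<lambda>i. mat_index ((that M A)$i)))"

definition drazin :: "complex^'k^'k \<Rightarrow> complex^'n^'n^'k \<Rightarrow> complex^'n^'n^'k" where
  "drazin M A = (THE W. mprod M W (tpow M A (tind M A + 1)) = tpow M A (tind M A)
       \<and> mprod M (mprod M W A) W = W \<and> mprod M A W = mprod M W A)"

definition one_inverses :: "complex^'k^'k \<Rightarrow> complex^'n^'n^'k \<Rightarrow> (complex^'n^'n^'k) set" where
  "one_inverses M A = {W. mprod M (mprod M A W) A = A}"

definition oneD :: "complex^'k^'k \<Rightarrow> complex^'n^'n^'k \<Rightarrow> complex^'n^'n^'k \<Rightarrow> complex^'n^'n^'k" where
  "oneD M A Am = mprod M (mprod M Am A) (drazin M A)"

end

theory Submission
  imports Defs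
begin


definition rowcomb :: "'a::field^'n^'m \<Rightarrow> ('a^'n) set" where
  "rowcomb A = {v. \<exists>c. v = (\<Sum>i\<in>UNIV. c i *s row i A)}"

lemma rowcomb_subspace: "vec.subspace (rowcomb A)"
  unfolding vec.subspace_def rowcomb_def
proof (intro conjI ballI allI, goal_cases)
  case 1
  show ?case by (intro CollectI exI[of _ "\<lambda>_. 0"]) (simp add: vec_eq_iff sum_component)
next
  case (2 x y)
  then obtain c d where "x = (\<Sum>i\<in>UNIV. c i *s row i A)" "y = (\<Sum>i\<in>UNIV. d i *s row i A)" by auto
  then show ?case
    by (intro CollectI exI[of _ "\<lambda>i. c i + d i"])
       (simp add: vec_eq_iff sum_component sum.distrib algebra_simps)
next
  case (3 a x)
  then obtain c where "x = (\<Sum>i\<in>UNIV. c i *s row i A)" by auto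
  then show ?case
    by (intro CollectI exI[of _ "\<lambda>i. a * c i"])
       (simp add: vec_eq_iff sum_component sum_distrib_left algebra_simps)
qed

lemma span_rows_eq: "vec.span (rows A) = rowcomb (A::'a::field^'n^'m)"
proof
  show "vec.span (rows A) \<subseteq> rowcomb A"
  proof (rule vec.span_minimal[OF _ rowcomb_subspace])
    show "rows A \<subseteq> rowcomb A"
    proof
      fix v assume "v \<in> rows A"
      then obtain i where v: "v = row i A" by (auto simp: rows_def)
      show "v \<in> rowcomb A" unfolding rowcomb_def
        by (intro CollectI exI[of _ "\<lambda>l. of_bool (l = i)"])
           (simp add: v vec_eq_iff sum_component vector_scalar_mult_def)
    qed
  qed
next
  show "rowcomb A \<subseteq> vec.span (rows A)"
  proof
    fix v assume "v \<in> rowcomb A"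
    then obtain c where v: "v = (\<Sum>i\<in>UNIV. c i *s row i A)" by (auto simp: rowcomb_def)
    show "v \<in> vec.span (rows A)" unfolding v
      by (intro vec.span_sum vec.span_scale vec.span_base) (auto simp: rows_def)
  qed
qed

lemma rows_mult_sub: "rows (B ** C) \<subseteq> rowcomb (C::'a::field^'n^'m)"
proof
  fix v assume "v \<in> rows (B ** C)"
  then obtain i where v: "v = row i (B ** C)" by (auto simp: rows_def)
  show "v \<in> rowcomb C" unfolding rowcomb_def
    by (intro CollectI exI[of _ "\<lambda>l. B$i$l"])
       (simp add: v vec_eq_iff sum_component row_def matrix_matrix_mult_def)
qed

lemma rank_mult_le: "rank (B ** C) \<le> rank (C::'a::field^'n^'m)"
  unfolding row_rank_def_gen
  by (rule vec.dim_mono) (use rows_mult_sub span_rows_eq in blast)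

lemma rank_mult_eq_left:
  fixes B :: "'a::field^'m^'p" and C :: "'a^'n^'m"
  assumes "rank (B ** C) = rank C"
  shows "\<exists>Z. C = Z ** (B ** C)"
proof -
  have sub: "rows (B ** C) \<subseteq> vec.span (rows C)" using rows_mult_sub span_rows_eq by blast
  have "vec.span (rows (B ** C)) = vec.span (vec.span (rows C))"
    by (rule vec.dim_eq_span[OF sub]) (use assms in \<open>simp add: row_rank_def_gen\<close>)
  then have "vec.span (rows C) = vec.span (rows (B ** C))" using vec.span_span by metis
  then have eq: "vec.span (rows C) = rowcomb (B ** C)" using span_rows_eq by metis
  have "\<forall>l. \<exists>c. row l C = (\<Sum>i\<in>UNIV. c i *s row i (B ** C))"
  proof
    fix l
    have "row l C \<in> vec.span (rows C)" by (intro vec.span_base) (auto simp: rows_def)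
    then show "\<exists>c. row l C = (\<Sum>i\<in>UNIV. c i *s row i (B ** C))" using eq by (auto simp: rowcomb_def)
  qed
  then obtain c where c: "\<And>l. row l C = (\<Sum>i\<in>UNIV. c l i *s row i (B ** C))" by metis
  show ?thesis
  proof (intro exI[of _ "\<chi> l i. c l i"])
    show "C = (\<chi> l i. c l i) ** (B ** C)"
    proof (subst vec_eq_iff, intro allI, subst vec_eq_iff, intro allI)
      fix l j
      have "C $ l $ j = row l C $ j" by (simp add: row_def)
      also have "\<dots> = (\<Sum>i\<in>UNIV. c l i * (B ** C) $ i $ j)"
        by (subst c) (simp add: sum_component row_def)
      finally show "C $ l $ j = ((\<chi> l i. c l i) ** (B ** C)) $ l $ j"
        by (simp add: matrix_matrix_mult_def)
    qed
  qed
qed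



locale mon =
  fixes mul :: "'a \<Rightarrow> 'a \<Rightarrow> 'a" (infixl "\<odot>" 70) and e :: 'a
  assumes assoc: "(x \<odot> y) \<odot> z = x \<odot> (y \<odot> z)"
    and lid: "e \<odot> x = x" and rid: "x \<odot> e = x"
begin

primrec pw :: "'a \<Rightarrow> nat \<Rightarrow> 'a" where
  "pw x 0 = e"
| "pw x (Suc n) = x \<odot> pw x n"

lemma pw_add: "pw x (m + n) = pw x m \<odot> pw x n"
  by (induct m) (simp_all add: lid assoc)

declare pw.simps(2)[simp del]

lemma pw_Suc': "pw x (Suc n) = pw x n \<odot> x"
  using pw_add[of x n 1] by (simp add: rid pw.simps)

lemma comm_pw: "x \<odot> y = y \<odot> x \<Longrightarrow> pw x m \<odot> y = y \<odot> pw x m"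
  by (induct m) (simp_all add: lid rid pw.simps, metis assoc)

lemma comm_pw2: "x \<odot> y = y \<odot> x \<Longrightarrow> pw x m \<odot> pw y n = pw y n \<odot> pw x m"
  by (metis comm_pw)

lemma left_prop:
  assumes "pw x j = z \<odot> pw x (Suc j)" "j \<le> m"
  shows "pw x m = z \<odot> pw x (Suc m)"
  using assms(2)
proof (induct m rule: dec_induct)
  case base then show ?case using assms(1) .
next
  case (step m)
  have "pw x (Suc m) = pw x m \<odot> x" by (rule pw_Suc')
  also have "\<dots> = z \<odot> (pw x (Suc m) \<odot> x)" by (simp add: step(3) assoc)
  also have "\<dots> = z \<odot> pw x (Suc (Suc m))" by (simp only: pw_Suc'[of x "Suc m"])
  finally show ?case .
qed

lemma right_prop:
  assumes "pw x j = pw x (Suc j) \<odot> y" "j \<le> m"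
  shows "pw x m = pw x (Suc m) \<odot> y"
  using assms(2)
proof (induct m rule: dec_induct)
  case base then show ?case using assms(1) .
next
  case (step m)
  have "pw x (Suc m) = x \<odot> pw x m" by (simp add: pw.simps)
  also have "\<dots> = pw x (Suc (Suc m)) \<odot> y" by (subst step(3)) (simp add: assoc pw.simps)
  finally show ?case .
qed

lemma left_iter:
  assumes "pw x k = z \<odot> pw x (Suc k)"
  shows "pw x k = pw z i \<odot> pw x (k + i)"
proof (induct i)
  case 0 then show ?case by (simp add: lid)
next
  case (Suc i)
  have "pw x (k + i) = z \<odot> pw x (Suc (k + i))" by (rule left_prop[OF assms]) simp
  then have "pw x k = pw z i \<odot> (z \<odot> pw x (k + Suc i))" using Suc by simp
  then show ?case by (simp only: pw_Suc'[of z i] assoc)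
qed

lemma right_iter:
  assumes "pw x k = pw x (Suc k) \<odot> y" "k \<le> m"
  shows "pw x m = pw x (m + i) \<odot> pw y i"
proof (induct i)
  case 0 then show ?case by (simp add: rid)
next
  case (Suc i)
  have "pw x (m + i) = pw x (Suc (m + i)) \<odot> y" by (rule right_prop[OF assms(1)]) (use assms(2) in simp)
  then have "pw x m = pw x (m + Suc i) \<odot> y \<odot> pw y i" using Suc by simp
  then show ?case by (simp add: assoc pw.simps)
qed

lemma right_fix:
  assumes l: "pw x k = z \<odot> pw x (Suc k)" and "k \<le> m" and r: "pw x m = pw x (Suc m) \<odot> y"
  shows "pw x k = pw x (Suc k) \<odot> y"
proof -
  define i where "i = m - k"
  have m: "m = k + i" using assms(2) by (simp add: i_def)
  have r': "pw x m = pw x m \<odot> x \<odot> y" using r by (simp only: pw_Suc')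
  have L: "pw x k = pw z i \<odot> pw x m" using left_iter[OF l, of i] m by metis
  have "pw x k = pw z i \<odot> (pw x m \<odot> x \<odot> y)" using L r' by metis
  also have "\<dots> = (pw z i \<odot> pw x m) \<odot> x \<odot> y" by (simp only: assoc)
  also have "\<dots> = pw x k \<odot> x \<odot> y" using L by metis
  also have "\<dots> = pw x (Suc k) \<odot> y" by (simp only: pw_Suc')
  finally show ?thesis .
qed

definition drz :: "'a \<Rightarrow> nat \<Rightarrow> 'a \<Rightarrow> bool" where
  "drz a k w \<longleftrightarrow> w \<odot> pw a (k + 1) = pw a k \<and> (w \<odot> a) \<odot> w = w \<and> a \<odot> w = w \<odot> a"

lemma drz_exists:
  assumes l: "pw a k = z \<odot> pw a (Suc k)" and r: "pw a k = pw a (Suc k) \<odot> y"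
  shows "\<exists>w. drz a k w"
proof -
  define w where "w = pw a k \<odot> pw y (Suc k)"
  have F1: "\<And>m i. k \<le> m \<Longrightarrow> pw a m = pw a (m + i) \<odot> pw y i" by (rule right_iter[OF r])
  have F2: "\<And>i. pw a k = pw z i \<odot> pw a (k + i)" by (rule left_iter[OF l])
  have F1k: "pw a (k + Suc k) \<odot> pw y (Suc k) = pw a k" using F1[of k "Suc k"] by simp
  have F2k: "pw z (Suc k) \<odot> pw a (k + Suc k) = pw a k" using F2[of "Suc k"] by simp
  have "a \<odot> w = (a \<odot> pw a k \<odot> y) \<odot> pw y k" by (simp add: w_def assoc pw.simps(2))
  also have "a \<odot> pw a k \<odot> y = pw a k" by (simp only: pw.simps(2)[symmetric] r[symmetric])
  finally have aw: "a \<odot> w = pw a k \<odot> pw y k" .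
  have "w \<odot> a = pw a k \<odot> pw y (Suc k) \<odot> a" by (simp add: w_def)
  also have "\<dots> = pw z (Suc k) \<odot> pw a (k + Suc k) \<odot> pw y (Suc k) \<odot> a"
    by (simp only: F2k)
  also have "\<dots> = pw z (Suc k) \<odot> (pw a (k + Suc k) \<odot> pw y (Suc k)) \<odot> a"
    by (simp only: assoc)
  also have "\<dots> = pw z (Suc k) \<odot> pw a k \<odot> a" by (simp only: F1k)
  also have "\<dots> = pw z (Suc k) \<odot> pw a (Suc k)" by (simp only: assoc pw_Suc')
  finally have wa: "w \<odot> a = pw z (Suc k) \<odot> pw a (Suc k)" .
  have G: "pw a (Suc k) = pw a (Suc k + k) \<odot> pw y k" using F1[of "Suc k" k] by simp
  have "pw z (Suc k) \<odot> pw a (Suc k) = pw z (Suc k) \<odot> (pw a (Suc k + k) \<odot> pw y k)"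
    using G by metis
  also have "\<dots> = (pw z (Suc k) \<odot> pw a (k + Suc k)) \<odot> pw y k"
    by (simp only: assoc add.commute[of k "Suc k"])
  also have "\<dots> = pw a k \<odot> pw y k" by (simp only: F2k)
  finally have c: "a \<odot> w = w \<odot> a" using aw wa by simp
  have d1: "w \<odot> pw a (k + 1) = pw a k"
  proof -
    have "w \<odot> pw a (k + 1) = (w \<odot> a) \<odot> pw a k" by (simp add: assoc pw.simps(2))
    also have "\<dots> = pw z (Suc k) \<odot> (pw a (Suc k) \<odot> pw a k)" by (simp only: wa assoc)
    also have "\<dots> = pw z (Suc k) \<odot> pw a (k + Suc k)"
      by (simp only: pw_add[symmetric] add.commute[of k "Suc k"])
    finally show ?thesis using F2k by simp
  qed
  have d2: "(w \<odot> a) \<odot> w = w"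
  proof -
    have "(w \<odot> a) \<odot> w = pw z (Suc k) \<odot> pw a (Suc k) \<odot> w" by (simp only: wa)
    also have "\<dots> = pw z (Suc k) \<odot> (pw a (Suc k) \<odot> pw a k) \<odot> pw y (Suc k)"
      by (simp only: w_def assoc)
    also have "\<dots> = pw z (Suc k) \<odot> pw a (k + Suc k) \<odot> pw y (Suc k)"
      by (simp only: pw_add[symmetric] add.commute[of k "Suc k"])
    also have "\<dots> = w" by (simp only: F2k w_def)
    finally show ?thesis .
  qed
  show ?thesis using c d1 d2 unfolding drz_def by blast
qed

lemma drz_unique_aux:
  assumes "drz a k w"
  shows "w = pw w (Suc k) \<odot> pw a k" and "pw a k \<odot> (a \<odot> w) = pw a k"
    and "w = pw a k \<odot> pw w (Suc k)" and "(a \<odot> w) \<odot> pw a k = pw a k"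
proof -
  have d1: "w \<odot> pw a (k + 1) = pw a k" and d2: "(w \<odot> a) \<odot> w = w" and c: "a \<odot> w = w \<odot> a"
    using assms by (auto simp: drz_def)
  have d1': "w \<odot> (a \<odot> pw a k) = pw a k" using d1 by (simp add: pw.simps(2))
  have wp: "w \<odot> (w \<odot> a) = w" using d2 c by (metis assoc)
  have "w = pw w (Suc i) \<odot> pw a i" for i
  proof (induct i)
    case 0 then show ?case by (simp add: rid pw.simps)
  next
    case (Suc i)
    have "pw w (Suc (Suc i)) \<odot> pw a (Suc i) = pw w (Suc i) \<odot> (w \<odot> a) \<odot> pw a i"
      by (simp only: pw_Suc'[of w "Suc i"] pw.simps(2)[of a i] assoc)
    also have "pw w (Suc i) \<odot> (w \<odot> a) = pw w (Suc i)"
      by (simp only: pw_Suc'[of w i] assoc wp)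
    finally have "pw w (Suc (Suc i)) \<odot> pw a (Suc i) = pw w (Suc i) \<odot> pw a i" .
    with Suc show ?case by metis
  qed
  then show w1: "w = pw w (Suc k) \<odot> pw a k" .
  have ca: "a \<odot> (a \<odot> w) = (a \<odot> w) \<odot> a" using c by (metis assoc)
  have "(w \<odot> a) \<odot> pw a k = pw a k" using d1' by (simp add: assoc)
  then have P: "(a \<odot> w) \<odot> pw a k = pw a k" using c by simp
  then show "(a \<odot> w) \<odot> pw a k = pw a k" .
  show "pw a k \<odot> (a \<odot> w) = pw a k" using P comm_pw[OF ca, of k] by simp
  have cw: "pw w (Suc k) \<odot> pw a k = pw a k \<odot> pw w (Suc k)" using comm_pw2[of a w] c by metis
  show "w = pw a k \<odot> pw w (Suc k)" using w1 cw by metis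
qed

lemma drz_unique:
  assumes "drz a k w1" "drz a k w2"
  shows "w1 = w2"
proof -
  note A1 = drz_unique_aux[OF assms(1)] and A2 = drz_unique_aux[OF assms(2)]
  have c1: "a \<odot> w1 = w1 \<odot> a" using assms(1) by (simp add: drz_def)
  have "w1 = pw w1 (Suc k) \<odot> (pw a k \<odot> (a \<odot> w2))" using A1(1) A2(2) by metis
  also have "\<dots> = w1 \<odot> (a \<odot> w2)" by (simp only: assoc[symmetric] A1(1)[symmetric])
  finally have e1: "w1 = (w1 \<odot> a) \<odot> w2" by (simp only: assoc)
  have "w2 = ((a \<odot> w1) \<odot> pw a k) \<odot> pw w2 (Suc k)" using A2(3) A1(4) by metis
  also have "\<dots> = (a \<odot> w1) \<odot> w2" by (simp only: assoc A2(3)[symmetric])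
  finally show ?thesis using e1 c1 by simp
qed

lemma main_alg:
  assumes D: "drz a k w" and I: "(a \<odot> g) \<odot> a = a" and X: "x = (g \<odot> a) \<odot> w" and Id: "x \<odot> x = x"
  shows "(pw a k = pw a (k+1) \<and> w \<odot> pw a k = pw a k)
    \<and> (pw x k = pw x k \<odot> a \<and> (\<forall>m::nat. m > 0 \<longrightarrow> pw x m = pw x m \<odot> a))
    \<and> (\<forall>m::nat. m > 0 \<longrightarrow> x = pw x m \<odot> pw a m)
    \<and> pw a k \<odot> x = pw a k"
proof -
  have d1: "w \<odot> pw a (k + 1) = pw a k" and d2: "(w \<odot> a) \<odot> w = w" and c: "a \<odot> w = w \<odot> a"
    using D by (auto simp: drz_def)
  have AX: "a \<odot> x = a \<odot> w" unfolding X by (simp only: assoc[symmetric] I)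
  have "a \<odot> (x \<odot> x) = (w \<odot> a) \<odot> x" by (simp only: assoc[symmetric] AX c)
  also have "\<dots> = w \<odot> ((a \<odot> g) \<odot> a) \<odot> w" unfolding X by (simp only: assoc)
  also have "\<dots> = w" by (simp only: I d2)
  finally have W: "a \<odot> w = w" using AX Id by simp
  have wa: "w \<odot> a = w" using W c by simp
  have a1: "pw a (k+1) = pw a k"
  proof -
    have "pw a (k+1) = a \<odot> (w \<odot> pw a (k+1))" using d1 by (simp add: pw.simps(2) del: One_nat_def) (metis One_nat_def add_Suc_right add_0_right pw.simps(2) d1)
    also have "\<dots> = w \<odot> pw a (k+1)" by (simp only: assoc[symmetric] W)
    finally show ?thesis using d1 by simp
  qed
  have a2: "w \<odot> pw a k = pw a k" using d1 a1 by simp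
  have xa: "x \<odot> a = x" unfolding X by (simp only: assoc wa)
  have xm: "m > 0 \<Longrightarrow> pw x m = x" for m
  proof (induct m)
    case 0 then show ?case by simp
  next
    case (Suc m) then show ?case by (cases m) (simp_all add: pw.simps rid Id)
  qed
  have xam: "x \<odot> pw a m = x" for m
  proof (induct m)
    case 0 then show ?case by (simp add: rid)
  next
    case (Suc m) then show ?case by (simp add: pw.simps(2) assoc[symmetric] xa)
  qed
  have b: "pw x k = pw x k \<odot> a"
  proof (cases "k = 0")
    case True
    then have "a = e" using a1 by (simp add: pw.simps rid)
    then show ?thesis using True by (simp add: lid)
  next
    case False then show ?thesis using xm xa by simp
  qed
  have akg: "pw a k \<odot> g \<odot> a = pw a k"
  proof -
    have s: "pw a k = pw a k \<odot> a" using a1 pw_Suc'[of a k] by simp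
    have "pw a k \<odot> g \<odot> a = (pw a k \<odot> a) \<odot> g \<odot> a" using s by metis
    also have "\<dots> = pw a k \<odot> ((a \<odot> g) \<odot> a)" by (simp only: assoc)
    also have "\<dots> = pw a k" using I s by simp
    finally show ?thesis .
  qed
  have akw: "pw a k \<odot> w = pw a k" using comm_pw[OF c, of k] a2 by simp
  have d: "pw a k \<odot> x = pw a k" unfolding X using akg akw by (metis assoc)
  show ?thesis using a1 a2 b xm xa xam d by auto
qed

end

interpretation Mx: mon "(**) :: 'a::semiring_1^'n^'n \<Rightarrow> _ \<Rightarrow> _" "mat 1"
  by unfold_locales (simp_all add: matrix_mul_assoc)

lemma mpow_eq: "mpow B m = Mx.pw B m"
  by (induct m) (simp_all add: Mx.pw.simps)

lemma mpow_transpose: "mpow (transpose B) m = transpose (mpow (B::'a::field^'n^'n) m)"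
proof (induct m)
  case 0 then show ?case by (simp add: transpose_mat)
next
  case (Suc m)
  have "transpose (mpow B (Suc m)) = transpose (mpow B m ** B)"
    by (simp only: mpow_eq Mx.pw_Suc')
  also have "\<dots> = transpose B ** transpose (mpow B m)" by (simp add: matrix_transpose_mul)
  finally show ?case using Suc by simp
qed

lemma rank_stab: "\<exists>j. rank (mpow (B::'a::field^'n^'n) (Suc j)) = rank (mpow B j)"
proof (rule ccontr)
  assume "\<not> ?thesis"
  then have lt: "rank (mpow B (Suc j)) < rank (mpow B j)" for j
    using rank_mult_le[of B "mpow B j"] by (simp add: le_less)
  have "rank (mpow B j) + j \<le> rank (mpow B 0)" for j
  proof (induct j)
    case 0 then show ?case by simp
  next
    case (Suc j) then show ?case using lt[of j] by simp
  qed
  from this[of "Suc (rank (mpow B 0))"] show False by simp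
qed

lemma mat_index_prop: "rank (mpow (B::'a::field^'n^'n) (Suc (mat_index B))) = rank (mpow B (mat_index B))"
  unfolding mat_index_def using rank_stab[of B] by (rule LeastI_ex)

lemma left_form_at:
  assumes "mat_index (B::'a::field^'n^'n) \<le> k"
  shows "\<exists>Z. mpow B k = Z ** mpow B (Suc k)"
proof -
  obtain Z where "mpow B (mat_index B) = Z ** (B ** mpow B (mat_index B))"
    using rank_mult_eq_left[of B "mpow B (mat_index B)"] mat_index_prop[of B] by auto
  then have "Mx.pw B (mat_index B) = Z ** Mx.pw B (Suc (mat_index B))"
    by (simp add: mpow_eq Mx.pw.simps)
  then have "Mx.pw B k = Z ** Mx.pw B (Suc k)" by (rule Mx.left_prop[OF _ assms])
  then show ?thesis by (auto simp: mpow_eq)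
qed

lemma slice_forms:
  assumes "mat_index (B::'a::field^'n^'n) \<le> k"
  shows "\<exists>Z Y. mpow B k = Z ** mpow B (Suc k) \<and> mpow B k = mpow B (Suc k) ** Y"
proof -
  obtain Z where Z: "Mx.pw B k = Z ** Mx.pw B (Suc k)"
    using left_form_at[OF assms] by (auto simp: mpow_eq)
  define m where "m = max k (mat_index (transpose B))"
  obtain Z' where Z': "mpow (transpose B) m = Z' ** mpow (transpose B) (Suc m)"
    using left_form_at[of "transpose B" m] by (auto simp: m_def)
  then have "transpose (mpow B m) = Z' ** transpose (mpow B (Suc m))"
    by (simp only: mpow_transpose)
  then have "transpose (transpose (mpow B m)) = transpose (Z' ** transpose (mpow B (Suc m)))"
    by (rule arg_cong)
  then have "mpow B m = mpow B (Suc m) ** transpose Z'"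
    by (simp only: matrix_transpose_mul transpose_transpose)
  then have R: "Mx.pw B m = Mx.pw B (Suc m) ** transpose Z'" by (simp only: mpow_eq)
  have "Mx.pw B k = Mx.pw B (Suc k) ** transpose Z'"
    by (rule Mx.right_fix[OF Z _ R]) (simp add: m_def)
  then show ?thesis using Z unfolding mpow_eq by blast
qed

lemma sum_swap_aux:
  fixes N M :: "complex^'k^'k" and c :: "'k \<Rightarrow> complex"
  shows "(\<Sum>l\<in>UNIV. N$k$l * (\<Sum>m\<in>UNIV. M$l$m * c m)) = (\<Sum>m\<in>UNIV. (\<Sum>l\<in>UNIV. N$k$l * M$l$m) * c m)"
proof -
  have "(\<Sum>l\<in>UNIV. N$k$l * (\<Sum>m\<in>UNIV. M$l$m * c m)) = (\<Sum>l\<in>UNIV. \<Sum>m\<in>UNIV. N$k$l * M$l$m * c m)"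
    by (simp add: sum_distrib_left mult.assoc)
  also have "\<dots> = (\<Sum>m\<in>UNIV. \<Sum>l\<in>UNIV. N$k$l * M$l$m * c m)" by (rule sum.swap)
  also have "\<dots> = (\<Sum>m\<in>UNIV. (\<Sum>l\<in>UNIV. N$k$l * M$l$m) * c m)"
    by (simp add: sum_distrib_right)
  finally show ?thesis .
qed

lemma mode3_comp: "mode3 N (mode3 M C) = mode3 (N ** M) C"
proof -
  have "mode3 N (mode3 M C) $ k $ i $ j = mode3 (N ** M) C $ k $ i $ j" for k i j
  proof -
    have "mode3 N (mode3 M C) $ k $ i $ j = (\<Sum>l\<in>UNIV. N$k$l * (\<Sum>m\<in>UNIV. M$l$m * C$m$i$j))"
      by (simp add: mode3_def)
    also have "\<dots> = (\<Sum>m\<in>UNIV. (\<Sum>l\<in>UNIV. N$k$l * M$l$m) * C$m$i$j)" by (rule sum_swap_aux)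
    also have "\<dots> = mode3 (N ** M) C $ k $ i $ j" by (simp add: mode3_def matrix_matrix_mult_def)
    finally show ?thesis .
  qed
  then show ?thesis by (simp add: vec_eq_iff)
qed

lemma if01_mult: "(if P then 1 else 0) * (x::complex) = (if P then x else 0)" by simp

lemma mode3_id: "mode3 (mat 1) C = C"
  by (simp add: mode3_def vec_eq_iff mat_def if01_mult)

lemma that_inv:
  assumes "M ** N = mat 1"
  shows "that M (that N T) = T"
  by (simp add: that_def mode3_comp assms mode3_id)

lemma that_mprod:
  assumes "M ** N = mat 1" "N ** M = mat 1"
  shows "that M (mprod M C D) $ i = that M C $ i ** that M D $ i"
proof -
  define V where "V = (\<chi> i. that M C $ i ** that M D $ i)"
  have ex: "\<exists>!T. \<forall>i. that M T $ i = that M C $ i ** that M D $ i"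
  proof
    show "\<forall>i. that M (that N V) $ i = that M C $ i ** that M D $ i"
      by (simp add: that_inv[OF assms(1)] V_def)
  next
    fix T assume "\<forall>i. that M T $ i = that M C $ i ** that M D $ i"
    then have "that M T = V" unfolding V_def by (intro iffD2[OF vec_eq_iff] allI) simp
    then show "T = that N V" using that_inv[OF assms(2), of T] by simp
  qed
  show ?thesis unfolding mprod_def using theI'[OF ex] by blast
qed

lemma that_tid:
  fixes M :: "complex^'k^'k"
  assumes "M ** N = mat 1" "N ** M = mat 1"
  shows "that M (tid M :: complex^'n^'n^'k) $ i = mat 1"
proof -
  have ex: "\<exists>!T::complex^'n^'n^'k. \<forall>i. that M T $ i = mat 1"
  proof
    show "\<forall>i. that M (that N (\<chi> i. mat 1) :: complex^'n^'n^'k) $ i = mat 1"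
      by (simp add: that_inv[OF assms(1)])
  next
    fix T :: "complex^'n^'n^'k" assume "\<forall>i. that M T $ i = mat 1"
    then have "that M T = (\<chi> i. mat 1)" by (intro iffD2[OF vec_eq_iff] allI) simp
    then show "T = that N (\<chi> i. mat 1)" using that_inv[OF assms(2), of T] by simp
  qed
  show ?thesis unfolding tid_def by (rule spec[OF theI'[OF ex]])
qed

lemma that_eq:
  assumes "N ** M = mat 1" "\<And>i. that M S $ i = that M T $ i"
  shows "S = T"
proof -
  have "that M S = that M T" by (intro iffD2[OF vec_eq_iff] allI assms(2))
  then have "that N (that M S) = that N (that M T)" by (rule arg_cong)
  then show ?thesis by (simp only: that_inv[OF assms(1)])
qed

lemma mon_tensor:
  assumes "M ** N = mat 1" "N ** M = mat 1"
  shows "mon (mprod M :: complex^'n^'n^'k \<Rightarrow> _ \<Rightarrow> _) (tid M)"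
proof
  fix x y z :: "complex^'n^'n^'k"
  show "mprod M (mprod M x y) z = mprod M x (mprod M y z)"
    by (rule that_eq[OF assms(2)]) (simp only: that_mprod[OF assms] matrix_mul_assoc)
  show "mprod M (tid M) x = x"
    by (rule that_eq[OF assms(2)]) (simp only: that_mprod[OF assms] that_tid[OF assms] matrix_mul_lid)
  show "mprod M x (tid M) = x"
    by (rule that_eq[OF assms(2)]) (simp only: that_mprod[OF assms] that_tid[OF assms] matrix_mul_rid)
qed

lemma that_tpow:
  assumes "M ** N = mat 1" "N ** M = mat 1"
  shows "that M (tpow M A m) $ i = mpow (that M A $ i) m"
  by (induct m) (simp_all add: that_mprod[OF assms] that_tid[OF assms])

theorem theorem3p6:
  fixes M :: "complex^'k^'k" and A Am :: "complex^'n^'n^'k" and k :: nat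
  assumes "invertible M"
    and "tind M A = k"
    and "Am \<in> one_inverses M A"
    and "mprod M (oneD M A Am) (oneD M A Am) = oneD M A Am"
  shows "(tpow M A k = tpow M A (k + 1) \<and> mprod M (drazin M A) (tpow M A k) = tpow M A k)
    \<and> (tpow M (oneD M A Am) k = mprod M (tpow M (oneD M A Am) k) A
       \<and> (\<forall>m::nat. m > 0 \<longrightarrow> tpow M (oneD M A Am) m = mprod M (tpow M (oneD M A Am) m) A))
    \<and> (\<forall>m::nat. m > 0 \<longrightarrow> oneD M A Am = mprod M (tpow M (oneD M A Am) m) (tpow M A m))
    \<and> mprod M (tpow M A k) (oneD M A Am) = tpow M A k"
proof -
  obtain N where MN: "M ** N = mat 1" and NM: "N ** M = mat 1"
    using assms(1) unfolding invertible_def by blast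
  interpret T: mon "mprod M :: complex^'n^'n^'k \<Rightarrow> _ \<Rightarrow> _" "tid M"
    by (rule mon_tensor[OF MN NM])
  have tp: "tpow M B m = T.pw B m" for B m
    by (induct m) (simp_all add: T.pw.simps)
  have le: "mat_index (that M A $ i) \<le> k" for i
    unfolding assms(2)[symmetric] tind_def by (rule Max_ge) auto
  have "\<forall>i. \<exists>Z Y. mpow (that M A $ i) k = Z ** mpow (that M A $ i) (Suc k)
           \<and> mpow (that M A $ i) k = mpow (that M A $ i) (Suc k) ** Y"
    using slice_forms[OF le] by blast
  then obtain Z Y where ZY: "\<And>i. mpow (that M A $ i) k = Z i ** mpow (that M A $ i) (Suc k)"
    "\<And>i. mpow (that M A $ i) k = mpow (that M A $ i) (Suc k) ** Y i" by metis
  define Zt where "Zt = that N (\<chi> i. Z i)"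
  define Yt where "Yt = that N (\<chi> i. Y i)"
  have l: "T.pw A k = mprod M Zt (T.pw A (Suc k))"
    by (rule that_eq[OF NM]) (simp add: tp[symmetric] that_mprod[OF MN NM] that_tpow[OF MN NM]
        Zt_def that_inv[OF MN] ZY(1)[symmetric] del: mpow.simps tpow.simps)
  have r: "T.pw A k = mprod M (T.pw A (Suc k)) Yt"
    by (rule that_eq[OF NM]) (simp add: tp[symmetric] that_mprod[OF MN NM] that_tpow[OF MN NM]
        Yt_def that_inv[OF MN] ZY(2)[symmetric] del: mpow.simps tpow.simps)
  obtain w where w: "T.drz A k w" using T.drz_exists[OF l r] by blast
  have dz: "drazin M A = w"
    unfolding drazin_def assms(2)
  proof (rule the_equality)
    show "mprod M w (tpow M A (k + 1)) = tpow M A k \<and> mprod M (mprod M w A) w = w \<and> mprod M A w = mprod M w A"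
      using w by (simp add: T.drz_def tp del: tpow.simps)
  next
    fix W assume "mprod M W (tpow M A (k + 1)) = tpow M A k \<and> mprod M (mprod M W A) W = W \<and> mprod M A W = mprod M W A"
    then have "T.drz A k W" by (simp add: T.drz_def tp del: tpow.simps)
    then show "W = w" using T.drz_unique w by blast
  qed
  have I: "mprod M (mprod M A Am) A = A" using assms(3) by (simp add: one_inverses_def)
  note G = T.main_alg[OF w I refl assms(4)[unfolded oneD_def dz]]
  show ?thesis unfolding oneD_def dz tp by (rule G)
qed

end
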